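(* Let $\phi$ be a $C^\infty$ homogeneous line bundle and $\mu\in M_\phi(\mathbb{R}^n,E)$. If $x\in\mathbb{R}^n$ and $\nu\in Tan^*(\mu,x)$, then $\nu\in\mathcal{S}'_\phi(\mathbb{R}^n)$, i.e. $\sum_{i=1}^m\langle\nu_i,\hat f_i\rangle=0$ for every $f=(f_1,\dots,f_m)\in\mathcal{S}_{\phi^\perp}(\mathbb{R}^n)$.
   Context: $E=\mathbb{C}^m$. A homogeneous line bundle is a continuous $\phi:\mathbb{R}^n\setminus\{0\}\to\mathbb{G}(1,E)$ with $\phi(a\xi)=\phi(\xi)$ for $a>0$; it is $C^\infty$ if locally $\phi(\xi)=\mathrm{span}\{e(\xi)\}$ with $e$ a $C^\infty$ unit vector field. $M_\phi(\mathbb{R}^n,E)$: finite $E$-valued Borel measures $\mu=(\mu_1,\dots,\mu_m)$ with $\hat\mu(\xi)\in\phi(\xi)$ for $\xi\neq0$, $\hat\mu_j(\xi)=\int e^{-2\pi i\langle\xi,x\rangle}d\mu_j$. $\mathcal{S}_{\phi^\perp}(\mathbb{R}^n)$ is the set of Schwartz functions $f=(f_1,\dots,f_m):\mathbb{R}^n\to E$ such that $\sum_i f_i(\xi)w_i=0$ for every $w\in\phi(\xi)$ and every $\xi\ne0$. $\mathcal{S}'_\phi(\mathbb{R}^n)$ is the set of $m$-tuples of tempered distributions $(\Lambda_1,\dots,\Lambda_m)$ with $\sum_i\langle\Lambda_i,\hat f_i\rangle=0$ for all $f\in\mathcal{S}_{\phi^\perp}(\mathbb{R}^n)$. Blow-up: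 $\mu_{x,r}(A)=\mu(x+rA)$. $Tan^*(\mu,x)$ is the set of ($E$-valued) tempered Radon measures $\nu$ for which there exist $r_j\downarrow0$ and $c_j>0$ with $c_j\mu_{x,r_j}\to\nu$ coordinatewise in $\mathcal{S}'(\mathbb{R}^n)$ (and weak-$*$ as Radon measures). *)

theory Defs
  imports "HOL-Analysis.Analysis"
begin

definition pderiv_dir :: "'n::finite \<Rightarrow> (real^'n \<Rightarrow> 'b::real_normed_vector) \<Rightarrow> real^'n \<Rightarrow> 'b" where
  "pderiv_dir i f x = vector_derivative (\<lambda>t. f (x + t *\<^sub>R axis i 1)) (at 0)"

definition iter_pderiv :: "'n::finite list \<Rightarrow> (real^'n \<Rightarrow> 'b::real_normed_vector) \<Rightarrow> real^'n \<Rightarrow> 'b" where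
  "iter_pderiv ds f = fold pderiv_dir ds f"

definition smooth_on :: "(real^'n::finite) set \<Rightarrow> (real^'n \<Rightarrow> 'b::real_normed_vector) \<Rightarrow> bool" where
  "smooth_on U f \<longleftrightarrow>
     (\<forall>ds. continuous_on U (iter_pderiv ds f) \<and>
       (\<forall>x\<in>U. \<forall>i. (\<lambda>t::real. iter_pderiv ds f (x + t *\<^sub>R axis i 1)) differentiable (at 0)))"

definition cline :: "complex^'m::finite \<Rightarrow> (complex^'m) set" where
  "cline e = {c *s e | c. True}"

text \<open>A C-infinity homogeneous line bundle phi : R^n minus 0 to G(1,E). Continuity is implied
  by the local smooth unit frame.\<close>
definition smooth_hom_line_bundle :: "(real^'n::finite \<Rightarrow> (complex^'m::finite) set) \<Rightarrow> bool" where
  "smooth_hom_line_bundle \<phi> \<longleftrightarrow>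
     (\<forall>\<xi>. \<xi> \<noteq> 0 \<longrightarrow> (\<exists>e. e \<noteq> 0 \<and> \<phi> \<xi> = cline e)) \<and>
     (\<forall>\<xi> a. \<xi> \<noteq> 0 \<longrightarrow> a > 0 \<longrightarrow> \<phi> (a *\<^sub>R \<xi>) = \<phi> \<xi>) \<and>
     (\<forall>\<xi>. \<xi> \<noteq> 0 \<longrightarrow> (\<exists>U e. open U \<and> \<xi> \<in> U \<and> 0 \<notin> U \<and> smooth_on U e \<and>
         (\<forall>\<zeta>\<in>U. norm (e \<zeta>) = 1 \<and> \<phi> \<zeta> = cline (e \<zeta>))))"

definition fourier_fun :: "(real^'n::finite \<Rightarrow> complex) \<Rightarrow> real^'n \<Rightarrow> complex" where
  "fourier_fun f x = (\<integral>\<xi>. exp (- (2 * pi * \<i>) * complex_of_real (x \<bullet> \<xi>)) * f \<xi> \<partial>lborel)"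

text \<open>A finite E-valued Borel measure is represented by a finite positive Borel measure M and
  an M-integrable density h with values in E: mu_j(A) = integral over A of h_j dM.\<close>
definition finite_vec_measure :: "(real^'n::finite) measure \<Rightarrow> (real^'n \<Rightarrow> complex^'m::finite) \<Rightarrow> bool" where
  "finite_vec_measure M h \<longleftrightarrow> sets M = sets borel \<and> finite_measure M \<and> integrable M h"

definition fourier_meas :: "(real^'n::finite) measure \<Rightarrow> (real^'n \<Rightarrow> complex^'m::finite) \<Rightarrow> real^'n \<Rightarrow> complex^'m" where
  "fourier_meas M h \<xi> = (\<chi> j. \<integral>x. exp (- (2 * pi * \<i>) * complex_of_real (\<xi> \<bullet> x)) * (h x $ j) \<partial>M)"

definition M_phi :: "(real^'n::finite \<Rightarrow> (complex^'m::finite) set) \<Rightarrow> (real^'n) measure \<Rightarrow> (real^'n \<Rightarrow> complex^'m) \<Rightarrow> bool" where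
  "M_phi \<phi> M h \<longleftrightarrow> finite_vec_measure M h \<and> (\<forall>\<xi>. \<xi> \<noteq> 0 \<longrightarrow> fourier_meas M h \<xi> \<in> \<phi> \<xi>)"

definition schwartz :: "(real^'n::finite \<Rightarrow> complex) \<Rightarrow> bool" where
  "schwartz f \<longleftrightarrow> smooth_on UNIV f \<and>
     (\<forall>(\<alpha>::'n \<Rightarrow> nat) ds. bounded (range (\<lambda>x. (\<Prod>i\<in>UNIV. (x $ i) ^ (\<alpha> i)) *\<^sub>R iter_pderiv ds f x)))"

definition S_phi_perp :: "(real^'n::finite \<Rightarrow> (complex^'m::finite) set) \<Rightarrow> ('m \<Rightarrow> real^'n \<Rightarrow> complex) \<Rightarrow> bool" where
  "S_phi_perp \<phi> f \<longleftrightarrow> (\<forall>i. schwartz (f i)) \<and>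
     (\<forall>\<xi> w. \<xi> \<noteq> 0 \<longrightarrow> w \<in> \<phi> \<xi> \<longrightarrow> (\<Sum>i\<in>UNIV. f i \<xi> * w $ i) = 0)"

text \<open>An E-valued Radon measure: a locally finite positive Borel measure N with a locally
  N-integrable E-valued density g.\<close>
definition vec_radon :: "(real^'n::finite) measure \<Rightarrow> (real^'n \<Rightarrow> complex^'m::finite) \<Rightarrow> bool" where
  "vec_radon N g \<longleftrightarrow> sets N = sets borel \<and> (\<forall>K. compact K \<longrightarrow> emeasure N K < \<infinity>) \<and>
     g \<in> borel_measurable N \<and> (\<forall>K. compact K \<longrightarrow> set_integrable N K g)"

definition compactly_supported_cont :: "(real^'n::finite \<Rightarrow> complex) \<Rightarrow> bool" where
  "compactly_supported_cont \<psi> \<longleftrightarrow> continuous_on UNIV \<psi> \<and> compact (closure {x. \<psi> x \<noteq> 0})"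

text \<open>Integral of psi against the blow-up mu_{x,r} (mu_{x,r}(A) = mu(x + rA)), j-th coordinate.\<close>
definition blowup_int :: "(real^'n::finite) measure \<Rightarrow> (real^'n \<Rightarrow> complex^'m::finite) \<Rightarrow> real^'n \<Rightarrow> real \<Rightarrow> 'm \<Rightarrow> (real^'n \<Rightarrow> complex) \<Rightarrow> complex" where
  "blowup_int M h x r j \<psi> = (\<integral>y. \<psi> ((1 / r) *\<^sub>R (y - x)) * (h y $ j) \<partial>M)"

text \<open>(N, g, Lam) in Tan_star M h x: the Radon measure nu = g N arises as the limit of
  c_k mu_{x,r_k} weak-* as Radon measures, and Lam is the tempered distribution (coordinatewise)
  that is the limit in S' of c_k mu_{x,r_k}, i.e. Lam j psi = <nu_j, psi> for Schwartz psi.\<close>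
definition Tan_star :: "(real^'n::finite) measure \<Rightarrow> (real^'n \<Rightarrow> complex^'m::finite) \<Rightarrow> real^'n
     \<Rightarrow> ((real^'n) measure \<times> (real^'n \<Rightarrow> complex^'m) \<times> ('m \<Rightarrow> (real^'n \<Rightarrow> complex) \<Rightarrow> complex)) set" where
  "Tan_star M h x = {(N, g, Lam). vec_radon N g \<and>
     (\<exists>r c :: nat \<Rightarrow> real. (\<forall>k. r k > 0) \<and> decseq r \<and> r \<longlonglongrightarrow> 0 \<and> (\<forall>k. c k > 0) \<and>
        (\<forall>j \<psi>. schwartz \<psi> \<longrightarrow>
            (\<lambda>k. complex_of_real (c k) * blowup_int M h x (r k) j \<psi>) \<longlonglongrightarrow> Lam j \<psi>) \<and>
        (\<forall>j \<psi>. compactly_supported_cont \<psi> \<longrightarrow>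
            (\<lambda>k. complex_of_real (c k) * blowup_int M h x (r k) j \<psi>) \<longlonglongrightarrow> (\<integral>y. \<psi> y * (g y $ j) \<partial>N)))}"

end

theory Submission
  imports Defs "HOL-Probability.Characteristic_Functions"
begin


lemma integrable_inv_1_plus_sq: "integrable lborel (\<lambda>t::real. 1 / (1 + t\<^sup>2))"
proof -
  have "set_integrable lborel (einterval (-\<infinity>) \<infinity>) (\<lambda>t::real. 1 / (1 + t\<^sup>2))"
  proof (rule interval_integral_FTC_nonneg(1)[where F=arctan and A="-(pi/2)" and B="pi/2"])
    show "\<And>x. -\<infinity> < ereal x \<Longrightarrow> ereal x < \<infinity> \<Longrightarrow> DERIV arctan x :> 1 / (1 + x\<^sup>2)"
      by (auto intro!: derivative_eq_intros simp: power2_eq_square field_simps add_nonneg_eq_0_iff)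
    show "\<And>x. isCont (\<lambda>t::real. 1 / (1 + t\<^sup>2)) x"
      by (auto intro!: continuous_intros simp: add_nonneg_eq_0_iff)
    show "((arctan \<circ> real_of_ereal) \<longlongrightarrow> - (pi / 2)) (at_right (- \<infinity>))"
      by (simp add: ereal_tendsto_simps tendsto_arctan_at_bot)
    show "((arctan \<circ> real_of_ereal) \<longlongrightarrow> (pi / 2)) (at_left \<infinity>)"
      by (simp add: ereal_tendsto_simps tendsto_arctan_at_top)
  qed auto
  then show ?thesis by (simp add: einterval_def set_integrable_def)
qed


definition wgt :: "real^'n::finite \<Rightarrow> real" where
  "wgt x = (\<Prod>i\<in>UNIV. 1 / (1 + (x$i)\<^sup>2))"

lemma Basis_vec_real: "(Basis :: (real^'n::finite) set) = range (\<lambda>i. axis i 1)"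
  by (auto simp: Basis_vec_def)

lemma prod_Basis_vec: "(\<Prod>b\<in>(Basis :: (real^'n::finite) set). g (x \<bullet> b)) = (\<Prod>i\<in>UNIV. g (x $ i))"
  unfolding Basis_vec_real
  by (subst prod.reindex) (auto simp: inj_on_def axis_eq_axis inner_axis)

lemma wgt_pos: "wgt x > 0"
  unfolding wgt_def by (intro prod_pos) (auto simp: add_pos_nonneg)

lemma wgt_le1: "wgt x \<le> 1"
  unfolding wgt_def by (intro prod_le_1) (auto simp: add_pos_nonneg)

lemma wgt_measurable[measurable]: "wgt \<in> borel_measurable borel"
  unfolding wgt_def by measurable

lemma integrable_wgt: "integrable lborel (wgt :: real^'n::finite \<Rightarrow> real)"
proof -
  have m: "(\<lambda>t::real. 1 / (1 + t\<^sup>2)) \<in> borel_measurable borel" by measurable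
  have fin: "(\<integral>\<^sup>+t. ennreal (1 / (1 + t\<^sup>2)) \<partial>lborel) < \<infinity>"
    using integrable_inv_1_plus_sq unfolding integrable_iff_bounded by simp
  have "(\<integral>\<^sup>+x. ennreal (wgt x) \<partial>(lborel :: (real^'n) measure)) =
        (\<integral>\<^sup>+x. (\<Prod>b\<in>(Basis :: (real^'n) set). ennreal (1 / (1 + (x \<bullet> b)\<^sup>2))) \<partial>lborel)"
    unfolding wgt_def prod_Basis_vec[where g="\<lambda>t. ennreal (1 / (1 + t\<^sup>2))", symmetric]
    by (simp add: prod_ennreal add_pos_nonneg prod_Basis_vec[where g="\<lambda>t. (1 / (1 + t\<^sup>2))"])
  also have "\<dots> = (\<Prod>b\<in>(Basis :: (real^'n) set). \<integral>\<^sup>+t. ennreal (1 / (1 + t\<^sup>2)) \<partial>lborel)"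
    by (rule nn_integral_lborel_prod) (use m in auto)
  also have "\<dots> < \<infinity>"
    using fin by (simp add: less_top[symmetric] ennreal_prod_eq_top power_eq_top_ennreal)
  finally show ?thesis
    unfolding integrable_iff_bounded by (simp add: less_imp_le wgt_pos)
qed


definition mon :: "('n::finite \<Rightarrow> nat) \<Rightarrow> real^'n \<Rightarrow> real" where
  "mon \<alpha> x = (\<Prod>i\<in>UNIV. (x$i) ^ (\<alpha> i))"

definition rapid :: "(real^'n::finite \<Rightarrow> complex) \<Rightarrow> bool" where
  "rapid g \<longleftrightarrow> g \<in> borel_measurable borel \<and> (\<forall>\<alpha>. \<exists>B. \<forall>x. norm (mon \<alpha> x *\<^sub>R g x) \<le> B)"

lemma mon_mult: "mon \<alpha> x * mon \<beta> x = mon (\<lambda>i. \<alpha> i + \<beta> i) x"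
  unfolding mon_def by (simp add: prod.distrib[symmetric] power_add)

lemma mon_coord: "x $ j = mon (\<lambda>i. if i = j then 1 else 0) x"
proof -
  have "mon (\<lambda>i. if i = j then 1 else 0) x = (\<Prod>i\<in>UNIV. if i = j then x$i else 1)"
    unfolding mon_def by (intro prod.cong) auto
  then show ?thesis by simp
qed

lemma mon_zero[simp]: "mon (\<lambda>i. 0) x = 1"
  unfolding mon_def by simp

lemma rapid_bound_wgt:
  fixes g :: "real^'n::finite \<Rightarrow> complex"
  assumes "rapid g"
  shows "\<exists>C. \<forall>x. norm (g x) \<le> C * wgt x"
proof -
  define \<alpha> :: "'n set \<Rightarrow> 'n \<Rightarrow> nat" where "\<alpha> X = (\<lambda>i::'n. if i \<in> X then 2 else (0::nat))" for X
  have "\<forall>X. \<exists>B. \<forall>x. norm (mon (\<alpha> X) x *\<^sub>R g x) \<le> B"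
    using assms unfolding rapid_def by blast
  then obtain B where B: "\<And>X x. norm (mon (\<alpha> X) x *\<^sub>R g x) \<le> B X" by metis
  have key: "(\<Prod>i\<in>UNIV. 1 + (x$i)\<^sup>2) = (\<Sum>X\<in>Pow UNIV. mon (\<alpha> X) x)" for x
  proof -
    have "(\<Prod>i\<in>UNIV. 1 + (x$i)\<^sup>2) = (\<Prod>i\<in>UNIV. (x$i)\<^sup>2 + 1)" by (simp add: add.commute)
    also have "\<dots> = (\<Sum>X\<in>Pow UNIV. (\<Prod>i\<in>X. (x$i)\<^sup>2) * (\<Prod>i\<in>UNIV - X. 1))"
      by (rule prod_add) simp
    also have "\<dots> = (\<Sum>X\<in>Pow UNIV. mon (\<alpha> X) x)"
    proof (intro sum.cong refl)
      fix X :: "'n set"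
      have "mon (\<alpha> X) x = (\<Prod>i\<in>UNIV. if i \<in> X then (x$i)\<^sup>2 else 1)"
        unfolding mon_def \<alpha>_def by (intro prod.cong) auto
      also have "\<dots> = (\<Prod>i\<in>UNIV \<inter> X. (x$i)\<^sup>2)"
        by (rule prod.inter_restrict[symmetric]) simp
      finally show "(\<Prod>i\<in>X. (x$i)\<^sup>2) * (\<Prod>i\<in>UNIV - X. 1) = mon (\<alpha> X) x" by simp
    qed
    finally show ?thesis .
  qed
  have mpos: "mon (\<alpha> X) x \<ge> 0" for X x
    unfolding mon_def \<alpha>_def by (intro prod_nonneg) auto
  show ?thesis
  proof (intro exI allI)
    fix x :: "real^'n"
    have pp: "(\<Prod>i\<in>UNIV. 1 + (x$i)\<^sup>2) > 0" by (intro prod_pos) (auto simp: add_pos_nonneg)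
    have "norm (g x) * (\<Prod>i\<in>UNIV. 1 + (x$i)\<^sup>2) = (\<Sum>X\<in>Pow UNIV. norm (mon (\<alpha> X) x *\<^sub>R g x))"
      by (simp add: key sum_distrib_left mpos mult.commute)
    also have "\<dots> \<le> (\<Sum>X\<in>Pow UNIV. B X)" by (intro sum_mono B)
    finally have "norm (g x) \<le> (\<Sum>X\<in>Pow UNIV. B X) / (\<Prod>i\<in>UNIV. 1 + (x$i)\<^sup>2)"
      using pp by (simp add: field_simps)
    also have "\<dots> = (\<Sum>X\<in>Pow UNIV. B X) * wgt x"
      unfolding wgt_def by (simp add: prod_dividef)
    finally show "norm (g x) \<le> (\<Sum>X\<in>Pow UNIV. B X) * wgt x" .
  qed
qed

lemma rapid_integrable:
  assumes "rapid g"
  shows "integrable lborel g"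
proof -
  obtain C where C: "\<And>x. norm (g x) \<le> C * wgt x" using rapid_bound_wgt[OF assms] by blast
  show ?thesis
  proof (rule Bochner_Integration.integrable_bound[where f="\<lambda>x. C * wgt x"])
    show "integrable lborel (\<lambda>x. C * wgt x)" by (intro integrable_mult_right integrable_wgt)
    show "g \<in> borel_measurable lborel" using assms unfolding rapid_def by simp
    show "AE x in lborel. norm (g x) \<le> norm (C * wgt x)"
      using C by (auto intro: order_trans[OF _ abs_ge_self])
  qed
qed

lemma rapid_mon_mult:
  assumes "rapid g"
  shows "rapid (\<lambda>x. complex_of_real (mon \<beta> x) * g x)"
  unfolding rapid_def
proof (intro conjI allI)
  have [measurable]: "g \<in> borel_measurable borel" using assms unfolding rapid_def by simp
  show "(\<lambda>x. complex_of_real (mon \<beta> x) * g x) \<in> borel_measurable borel"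
    unfolding mon_def by measurable
  fix \<alpha>
  obtain B where "\<forall>x. norm (mon (\<lambda>i. \<alpha> i + \<beta> i) x *\<^sub>R g x) \<le> B"
    using assms unfolding rapid_def by blast
  then show "\<exists>B. \<forall>x. norm (mon \<alpha> x *\<^sub>R (complex_of_real (mon \<beta> x) * g x)) \<le> B"
    by (intro exI[of _ B]) (simp add: mon_mult[symmetric] norm_mult abs_mult mult.assoc)
qed

lemma rapid_cmult:
  assumes "rapid g"
  shows "rapid (\<lambda>x. c * g x)"
  unfolding rapid_def
proof (intro conjI allI)
  have [measurable]: "g \<in> borel_measurable borel" using assms unfolding rapid_def by simp
  show "(\<lambda>x. c * g x) \<in> borel_measurable borel"
    by measurable
  fix \<alpha>
  obtain B where "\<forall>x. norm (mon \<alpha> x *\<^sub>R g x) \<le> B"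
    using assms unfolding rapid_def by blast
  then show "\<exists>B. \<forall>x. norm (mon \<alpha> x *\<^sub>R (c * g x)) \<le> B"
    by (intro exI[of _ "norm c * B"]) (auto simp: norm_mult mult.left_commute intro: mult_left_mono)
qed

lemma rapid_coord:
  assumes "rapid g"
  shows "rapid (\<lambda>x. complex_of_real (x $ j) * g x)"
  using rapid_mon_mult[OF assms, of "\<lambda>i. if i = j then 1 else 0"] by (simp add: mon_coord[symmetric])


lemma iter_pderiv_Nil[simp]: "iter_pderiv [] f = f"
  by (simp add: iter_pderiv_def)

lemma iter_pderiv_Cons: "iter_pderiv (d # ds) f = iter_pderiv ds (pderiv_dir d f)"
  by (simp add: iter_pderiv_def)

lemma iter_pderiv_append: "iter_pderiv (ds @ es) f = iter_pderiv es (iter_pderiv ds f)"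
  by (simp add: iter_pderiv_def)

lemma iter_pderiv_snoc: "iter_pderiv (ds @ [d]) f = pderiv_dir d (iter_pderiv ds f)"
  by (simp add: iter_pderiv_def)

lemma smooth_on_iter:
  assumes "smooth_on U f"
  shows "smooth_on U (iter_pderiv ds f)"
  using assms unfolding smooth_on_def iter_pderiv_append[symmetric] by blast

lemma smooth_on_pderiv:
  assumes "smooth_on U f"
  shows "smooth_on U (pderiv_dir j f)"
  using smooth_on_iter[OF assms, of "[j]"] by (simp add: iter_pderiv_def)

lemma smooth_on_cont:
  assumes "smooth_on U f"
  shows "continuous_on U f"
  using assms unfolding smooth_on_def by (metis iter_pderiv_Nil)

lemma smooth_vd0:
  assumes "smooth_on U f" "x \<in> U"
  shows "((\<lambda>t. f (x + t *\<^sub>R axis j 1)) has_vector_derivative pderiv_dir j f x) (at 0)"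
proof -
  have "(\<lambda>t. f (x + t *\<^sub>R axis j 1)) differentiable (at 0)"
    using assms unfolding smooth_on_def by (metis iter_pderiv_Nil)
  then show ?thesis unfolding pderiv_dir_def by (simp add: vector_derivative_works)
qed

lemma vd_shift:
  fixes g :: "real \<Rightarrow> 'b::real_normed_vector"
  assumes "((\<lambda>t. g (s + t)) has_vector_derivative D) (at 0)"
  shows "(g has_vector_derivative D) (at s)"
proof -
  have 1: "((\<lambda>t. t - s) has_vector_derivative 1) (at s)"
    by (auto intro!: derivative_eq_intros)
  have "(((\<lambda>t. g (s + t)) \<circ> (\<lambda>t. t - s)) has_vector_derivative (1 *\<^sub>R D)) (at s)"
    by (rule vector_diff_chain_at[OF 1]) (use assms in simp)
  then show ?thesis by (simp add: o_def)
qed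

lemma smooth_vd:
  assumes "smooth_on UNIV f"
  shows "((\<lambda>t. f (x + t *\<^sub>R axis j 1)) has_vector_derivative pderiv_dir j f (x + s *\<^sub>R axis j 1)) (at s)"
proof (rule vd_shift)
  have "((\<lambda>t. f ((x + s *\<^sub>R axis j 1) + t *\<^sub>R axis j 1)) has_vector_derivative pderiv_dir j f (x + s *\<^sub>R axis j 1)) (at 0)"
    by (rule smooth_vd0[OF assms]) simp
  then show "((\<lambda>t. f (x + (s + t) *\<^sub>R axis j 1)) has_vector_derivative pderiv_dir j f (x + s *\<^sub>R axis j 1)) (at 0)"
    by (simp add: scaleR_add_left add.assoc)
qed

lemma pderiv_eq:
  assumes "\<And>x. ((\<lambda>t. g (x + t *\<^sub>R axis j 1)) has_vector_derivative D x) (at 0)"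
  shows "pderiv_dir j g = D"
  using assms unfolding pderiv_dir_def by (simp add: fun_eq_iff vector_derivative_at)

lemma schwartz_smooth: "schwartz f \<Longrightarrow> smooth_on UNIV f"
  by (simp add: schwartz_def)

lemma schwartz_bound:
  assumes "schwartz f"
  shows "\<exists>B. \<forall>x. norm ((\<Prod>i\<in>UNIV. (x $ i) ^ (\<alpha> i)) *\<^sub>R iter_pderiv ds f x) \<le> B"
  using assms unfolding schwartz_def bounded_iff by blast

lemma schwartz_iter:
  assumes "schwartz f"
  shows "schwartz (iter_pderiv ds f)"
  using assms unfolding schwartz_def
  by (auto simp: smooth_on_iter iter_pderiv_append[symmetric])

lemma schwartz_pderiv:
  assumes "schwartz f"
  shows "schwartz (pderiv_dir j f)"
  using schwartz_iter[OF assms, of "[j]"] by (simp add: iter_pderiv_def)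

lemma schwartz_cont: "schwartz f \<Longrightarrow> continuous_on UNIV f"
  using schwartz_smooth smooth_on_cont by blast

lemma schwartz_meas: "schwartz f \<Longrightarrow> f \<in> borel_measurable borel"
  using schwartz_cont borel_measurable_continuous_onI by blast

lemma iter_pderiv_cmult:
  fixes f :: "real^'n::finite \<Rightarrow> complex"
  assumes "smooth_on UNIV f"
  shows "iter_pderiv ds (\<lambda>x. c * f x) = (\<lambda>x. c * iter_pderiv ds f x)"
  using assms
proof (induction ds arbitrary: f)
  case Nil then show ?case by simp
next
  case (Cons d ds)
  have "pderiv_dir d (\<lambda>x. c * f x) = (\<lambda>x. c * pderiv_dir d f x)"
  proof (rule pderiv_eq)
    fix x
    have "((\<lambda>t. f (x + t *\<^sub>R axis d 1)) has_vector_derivative pderiv_dir d f x) (at 0)"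
      using smooth_vd0[OF Cons.prems, of x d] by simp
    then show "((\<lambda>t. c * f (x + t *\<^sub>R axis d 1)) has_vector_derivative c * pderiv_dir d f x) (at 0)"
      by (rule has_vector_derivative_mult_right)
  qed
  then show ?case
    by (simp add: iter_pderiv_Cons Cons.IH smooth_on_pderiv Cons.prems)
qed

lemma smooth_cmult:
  fixes f :: "real^'n::finite \<Rightarrow> complex"
  assumes "smooth_on UNIV f"
  shows "smooth_on UNIV (\<lambda>x. c * f x)"
  unfolding smooth_on_def iter_pderiv_cmult[OF assms]
proof (intro allI conjI ballI)
  fix ds
  show "continuous_on UNIV (\<lambda>x. c * iter_pderiv ds f x)"
    proof -
    have "continuous_on UNIV (\<lambda>x. iter_pderiv ds f x)"
      using smooth_on_cont[OF smooth_on_iter[OF assms]] by (simp add: eta_contract_eq)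
    then show ?thesis by (intro continuous_intros)
  qed
  fix x i
  show "(\<lambda>t. c * iter_pderiv ds f (x + t *\<^sub>R axis i 1)) differentiable at 0"
  proof -
    have "((\<lambda>t. iter_pderiv ds f (x + t *\<^sub>R axis i 1)) has_vector_derivative pderiv_dir i (iter_pderiv ds f) x) (at 0)"
      using smooth_vd0[OF smooth_on_iter[OF assms, of ds], of x i] by simp
    then have "((\<lambda>t. c * iter_pderiv ds f (x + t *\<^sub>R axis i 1)) has_vector_derivative c * pderiv_dir i (iter_pderiv ds f) x) (at 0)"
      by (rule has_vector_derivative_mult_right)
    then show ?thesis by (rule differentiableI_vector)
  qed
qed

lemma schwartz_cmult:
  assumes "schwartz f"
  shows "schwartz (\<lambda>x. c * f x)"
  unfolding schwartz_def
proof (intro conjI allI)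
  show "smooth_on UNIV (\<lambda>x. c * f x)" using smooth_cmult schwartz_smooth assms by blast
  fix \<alpha> :: "'a \<Rightarrow> nat" and ds
  obtain B where "\<forall>x. norm ((\<Prod>i\<in>UNIV. (x $ i) ^ (\<alpha> i)) *\<^sub>R iter_pderiv ds f x) \<le> B"
    using schwartz_bound[OF assms] by blast
  then show "bounded (range (\<lambda>x. (\<Prod>i\<in>UNIV. (x $ i) ^ (\<alpha> i)) *\<^sub>R iter_pderiv ds (\<lambda>x. c * f x) x))"
    unfolding bounded_iff iter_pderiv_cmult[OF schwartz_smooth[OF assms]]
    by (intro exI[of _ "norm c * B"]) (auto simp: norm_mult mult.left_commute intro: mult_left_mono)
qed


lemma coord_line: "(x + t *\<^sub>R axis i (1::real)) $ j = x $ j + t * (if i = j then 1 else 0)"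
  by (simp add: axis_def)

lemma vd_formula:
  fixes f :: "real^'n::finite \<Rightarrow> complex"
  assumes "smooth_on UNIV f"
  shows "((\<lambda>t. complex_of_real ((x + t *\<^sub>R axis i 1) $ j) * iter_pderiv ds f (x + t *\<^sub>R axis i 1)
              + (\<Sum>k<K. iter_pderiv (E k) f (x + t *\<^sub>R axis i 1)))
          has_vector_derivative
          ((if i = j then iter_pderiv ds f x else 0) + complex_of_real (x $ j) * pderiv_dir i (iter_pderiv ds f) x
              + (\<Sum>k<K. pderiv_dir i (iter_pderiv (E k) f) x))) (at 0)"
proof -
  have F: "((\<lambda>t. iter_pderiv ds f (x + t *\<^sub>R axis i 1)) has_vector_derivative pderiv_dir i (iter_pderiv ds f) x) (at 0)"
    using smooth_vd0[OF smooth_on_iter[OF assms, of ds], of x i] by simp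
  have G: "((\<lambda>t. iter_pderiv (E k) f (x + t *\<^sub>R axis i 1)) has_vector_derivative pderiv_dir i (iter_pderiv (E k) f) x) (at 0)" for k
    using smooth_vd0[OF smooth_on_iter[OF assms, of "E k"], of x i] by simp
  have C: "((\<lambda>t. complex_of_real ((x + t *\<^sub>R axis i 1) $ j)) has_vector_derivative
            complex_of_real (if i = j then 1 else 0)) (at 0)"
    unfolding coord_line by (rule has_vector_derivative_of_real) (auto intro!: derivative_eq_intros)
  have "((\<lambda>t. complex_of_real ((x + t *\<^sub>R axis i 1) $ j) * iter_pderiv ds f (x + t *\<^sub>R axis i 1)
              + (\<Sum>k<K. iter_pderiv (E k) f (x + t *\<^sub>R axis i 1)))
          has_vector_derivative
          (complex_of_real ((x + 0 *\<^sub>R axis i 1) $ j) * pderiv_dir i (iter_pderiv ds f) x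
             + complex_of_real (if i = j then 1 else 0) * iter_pderiv ds f (x + 0 *\<^sub>R axis i 1)
              + (\<Sum>k<K. pderiv_dir i (iter_pderiv (E k) f) x))) (at 0)"
    by (intro has_vector_derivative_add has_vector_derivative_mult[OF C F] has_vector_derivative_sum G)
  then show ?thesis
    by (rule has_vector_derivative_eq_rhs) (auto simp: algebra_simps)
qed

lemma iter_pderiv_coord:
  fixes f :: "real^'n::finite \<Rightarrow> complex"
  assumes "smooth_on UNIV f"
  shows "\<exists>(K::nat) E. iter_pderiv ds (\<lambda>x. complex_of_real (x $ j) * f x) =
            (\<lambda>x. complex_of_real (x $ j) * iter_pderiv ds f x + (\<Sum>k<K. iter_pderiv (E k) f x))"
proof (induction ds rule: rev_induct)
  case Nil
  show ?case by (rule exI[of _ "0::nat"], rule exI[of _ "\<lambda>k. []"]) simp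
next
  case (snoc d ds)
  then obtain K :: nat and E where KE: "iter_pderiv ds (\<lambda>x. complex_of_real (x $ j) * f x) =
            (\<lambda>x. complex_of_real (x $ j) * iter_pderiv ds f x + (\<Sum>k<K. iter_pderiv (E k) f x))"
    by blast
  have pd: "iter_pderiv (ds @ [d]) (\<lambda>x. complex_of_real (x $ j) * f x) =
      (\<lambda>x. (if d = j then iter_pderiv ds f x else 0) + complex_of_real (x $ j) * pderiv_dir d (iter_pderiv ds f) x
              + (\<Sum>k<K. pderiv_dir d (iter_pderiv (E k) f) x))"
    unfolding iter_pderiv_snoc KE
    by (rule pderiv_eq) (rule vd_formula[OF assms])
  define K' where "K' = K + (if d = j then 1 else 0)"
  define E' where "E' k = (if k < K then E k @ [d] else ds)" for k
  have "(\<Sum>k<K'. iter_pderiv (E' k) f x) = (if d = j then iter_pderiv ds f x else 0)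
          + (\<Sum>k<K. pderiv_dir d (iter_pderiv (E k) f) x)" for x
  proof -
    have "(\<Sum>k<K. iter_pderiv (E' k) f x) = (\<Sum>k<K. pderiv_dir d (iter_pderiv (E k) f) x)"
      by (intro sum.cong) (auto simp: E'_def iter_pderiv_snoc)
    then show ?thesis
      by (auto simp: K'_def E'_def)
  qed
  then have "iter_pderiv (ds @ [d]) (\<lambda>x. complex_of_real (x $ j) * f x) =
            (\<lambda>x. complex_of_real (x $ j) * iter_pderiv (ds @ [d]) f x + (\<Sum>k<K'. iter_pderiv (E' k) f x))"
    unfolding pd by (auto simp: iter_pderiv_snoc fun_eq_iff algebra_simps)
  then show ?case by blast
qed

lemma smooth_coord:
  fixes f :: "real^'n::finite \<Rightarrow> complex"
  assumes "smooth_on UNIV f"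
  shows "smooth_on UNIV (\<lambda>x. complex_of_real (x $ j) * f x)"
  unfolding smooth_on_def
proof (intro allI conjI ballI)
  fix ds
  obtain K :: nat and E where KE: "iter_pderiv ds (\<lambda>x. complex_of_real (x $ j) * f x) =
            (\<lambda>x. complex_of_real (x $ j) * iter_pderiv ds f x + (\<Sum>k<K. iter_pderiv (E k) f x))"
    using iter_pderiv_coord[OF assms] by blast
  have c: "continuous_on UNIV (\<lambda>x. iter_pderiv es f x)" for es
    using smooth_on_cont[OF smooth_on_iter[OF assms, of es]] by (simp add: eta_contract_eq)
  show "continuous_on UNIV (iter_pderiv ds (\<lambda>x. complex_of_real (x $ j) * f x))"
    unfolding KE by (intro continuous_intros c)
  fix x i
  show "(\<lambda>t. iter_pderiv ds (\<lambda>x. complex_of_real (x $ j) * f x) (x + t *\<^sub>R axis i 1)) differentiable at 0"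
    unfolding KE using vd_formula[OF assms, where x=x and i=i and j=j and ds=ds and K=K and E=E] by (rule differentiableI_vector)
qed

lemma schwartz_coord:
  fixes f :: "real^'n::finite \<Rightarrow> complex"
  assumes "schwartz f"
  shows "schwartz (\<lambda>x. complex_of_real (x $ j) * f x)"
  unfolding schwartz_def
proof (intro conjI allI)
  have sm: "smooth_on UNIV f" using assms by (rule schwartz_smooth)
  show "smooth_on UNIV (\<lambda>x. complex_of_real (x $ j) * f x)" by (rule smooth_coord[OF sm])
  fix \<alpha> :: "'n \<Rightarrow> nat" and ds
  obtain K :: nat and E where KE: "iter_pderiv ds (\<lambda>x. complex_of_real (x $ j) * f x) =
            (\<lambda>x. complex_of_real (x $ j) * iter_pderiv ds f x + (\<Sum>k<K. iter_pderiv (E k) f x))"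
    using iter_pderiv_coord[OF sm] by blast
  have "\<forall>\<beta> es. \<exists>B. \<forall>x. norm (mon \<beta> x *\<^sub>R iter_pderiv es f x) \<le> B"
    using schwartz_bound[OF assms] unfolding mon_def by blast
  then obtain B where B: "\<And>\<beta> es x. norm (mon \<beta> x *\<^sub>R iter_pderiv es f x) \<le> B \<beta> es" by metis
  define \<beta> where "\<beta> = (\<lambda>i. \<alpha> i + (if i = j then 1 else 0))"
  have "norm (mon \<alpha> x *\<^sub>R iter_pderiv ds (\<lambda>x. complex_of_real (x $ j) * f x) x)
          \<le> B \<beta> ds + (\<Sum>k<K. B \<alpha> (E k))" for x
  proof -
    have eq: "mon \<alpha> x *\<^sub>R iter_pderiv ds (\<lambda>x. complex_of_real (x $ j) * f x) x
          = mon \<beta> x *\<^sub>R iter_pderiv ds f x + (\<Sum>k<K. mon \<alpha> x *\<^sub>R iter_pderiv (E k) f x)"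
      unfolding KE \<beta>_def mon_mult[symmetric] mon_coord[of x j]
      by (simp add: scaleR_add_right scaleR_sum_right scaleR_conv_of_real algebra_simps sum_distrib_left)
    have "norm (mon \<beta> x *\<^sub>R iter_pderiv ds f x + (\<Sum>k<K. mon \<alpha> x *\<^sub>R iter_pderiv (E k) f x))
          \<le> norm (mon \<beta> x *\<^sub>R iter_pderiv ds f x) + (\<Sum>k<K. norm (mon \<alpha> x *\<^sub>R iter_pderiv (E k) f x))"
      by (intro order_trans[OF norm_triangle_ineq] add_left_mono norm_sum)
    also have "\<dots> \<le> B \<beta> ds + (\<Sum>k<K. B \<alpha> (E k))"
      by (intro add_mono B sum_mono)
    finally show ?thesis unfolding eq .
  qed
  then show "bounded (range (\<lambda>x. (\<Prod>i\<in>UNIV. (x $ i) ^ (\<alpha> i)) *\<^sub>R iter_pderiv ds (\<lambda>x. complex_of_real (x $ j) * f x) x))"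
    unfolding bounded_iff mon_def[symmetric] by blast
qed


lemma QDUI:
  fixes u :: "real \<Rightarrow> 'a \<Rightarrow> complex"
  assumes int: "\<And>t. integrable M (u t)" and int1: "integrable M u1" and intG: "integrable M G"
    and bnd: "\<And>t y. \<bar>t\<bar> \<le> 1 \<Longrightarrow> y \<in> space M \<Longrightarrow> norm (u t y - u 0 y - t *\<^sub>R u1 y) \<le> t\<^sup>2 * G y"
  shows "((\<lambda>t. \<integral>y. u t y \<partial>M) has_vector_derivative (\<integral>y. u1 y \<partial>M)) (at 0)"
  unfolding has_vector_derivative_def has_derivative_at
proof (intro conjI)
  show "bounded_linear (\<lambda>x. x *\<^sub>R integral\<^sup>L M u1)" by (rule bounded_linear_scaleR_left)
  let ?I = "\<lambda>t. \<integral>y. u t y \<partial>M"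
  show "(\<lambda>h. norm (?I (0 + h) - ?I 0 - h *\<^sub>R integral\<^sup>L M u1) / norm h) \<midarrow>0\<rightarrow> 0"
  proof (rule Lim_null_comparison)
    show "((\<lambda>h. \<bar>h\<bar> * (\<integral>y. G y \<partial>M)) \<longlongrightarrow> 0) (at 0)"
      by (auto intro!: tendsto_eq_intros)
    have "eventually (\<lambda>h. h \<in> ball 0 1) (at (0::real))"
      by (rule eventually_at_in_open') auto
    then show "\<forall>\<^sub>F h in at 0. norm (norm (?I (0 + h) - ?I 0 - h *\<^sub>R integral\<^sup>L M u1) / norm h) \<le> \<bar>h\<bar> * (\<integral>y. G y \<partial>M)"
    proof (rule eventually_mono)
      fix h :: real assume "h \<in> ball 0 1"
      then have h1: "\<bar>h\<bar> \<le> 1" by auto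
      have "?I h - ?I 0 - h *\<^sub>R integral\<^sup>L M u1 = (\<integral>y. u h y - u 0 y - h *\<^sub>R u1 y \<partial>M)"
        using int int1 by simp
      also have "norm \<dots> \<le> (\<integral>y. norm (u h y - u 0 y - h *\<^sub>R u1 y) \<partial>M)"
        by (rule integral_norm_bound)
      also have "\<dots> \<le> (\<integral>y. h\<^sup>2 * G y \<partial>M)"
        by (rule integral_mono) (use int int1 intG bnd h1 in auto)
      also have "\<dots> = h\<^sup>2 * (\<integral>y. G y \<partial>M)" by simp
      finally have *: "norm (?I h - ?I 0 - h *\<^sub>R integral\<^sup>L M u1) \<le> h\<^sup>2 * (\<integral>y. G y \<partial>M)" .
      show "norm (norm (?I (0 + h) - ?I 0 - h *\<^sub>R integral\<^sup>L M u1) / norm h) \<le> \<bar>h\<bar> * (\<integral>y. G y \<partial>M)"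
      proof (cases "h = 0")
        case True then show ?thesis by simp
      next
        case False
        then have "norm (?I h - ?I 0 - h *\<^sub>R integral\<^sup>L M u1) / \<bar>h\<bar> \<le> h\<^sup>2 * (\<integral>y. G y \<partial>M) / \<bar>h\<bar>"
          using * by (intro divide_right_mono) auto
        also have "\<dots> = \<bar>h\<bar> * (\<integral>y. G y \<partial>M)"
        proof -
          have hh: "h\<^sup>2 = \<bar>h\<bar> * \<bar>h\<bar>" by (simp add: power2_eq_square)
          show ?thesis unfolding hh using False
            by (metis abs_eq_0 mult.assoc nonzero_mult_div_cancel_left)
        qed
        finally show ?thesis by simp
      qed
    qed
  qed
qed

lemma mvt_seg:
  fixes \<phi> :: "real \<Rightarrow> 'b::real_normed_vector"
  assumes "\<And>s. s \<in> closed_segment 0 t \<Longrightarrow> (\<phi> has_vector_derivative \<phi>' s) (at s)"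
    and "\<And>s. s \<in> closed_segment 0 t \<Longrightarrow> norm (\<phi>' s) \<le> B"
  shows "norm (\<phi> t - \<phi> 0) \<le> B * \<bar>t\<bar>"
proof -
  have "norm (\<phi> t - \<phi> 0) \<le> B * norm (t - 0)"
  proof (rule differentiable_bound[where f' = "\<lambda>s h. h *\<^sub>R \<phi>' s"])
    show "convex (closed_segment 0 t)" by simp
    fix s assume s: "s \<in> closed_segment 0 t"
    show "(\<phi> has_derivative (\<lambda>h. h *\<^sub>R \<phi>' s)) (at s within closed_segment 0 t)"
      using assms(1)[OF s] unfolding has_vector_derivative_def by (rule has_derivative_at_withinI)
    show "onorm (\<lambda>h. h *\<^sub>R \<phi>' s) \<le> B"
      using assms(2)[OF s] by (simp add: onorm_scaleR_left[OF bounded_linear_ident] onorm_id)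
  qed auto
  then show ?thesis by simp
qed

lemma seg_abs: "s \<in> closed_segment 0 (t::real) \<Longrightarrow> \<bar>s\<bar> \<le> \<bar>t\<bar>"
  by (auto simp: closed_segment_eq_real_ivl split: if_splits)

lemma taylor2:
  fixes \<phi> :: "real \<Rightarrow> 'b::real_normed_vector"
  assumes d1: "\<And>s. \<bar>s\<bar> \<le> 1 \<Longrightarrow> (\<phi> has_vector_derivative \<phi>1 s) (at s)"
    and d2: "\<And>s. \<bar>s\<bar> \<le> 1 \<Longrightarrow> (\<phi>1 has_vector_derivative \<phi>2 s) (at s)"
    and b2: "\<And>s. \<bar>s\<bar> \<le> 1 \<Longrightarrow> norm (\<phi>2 s) \<le> B"
    and t: "\<bar>t\<bar> \<le> 1"
  shows "norm (\<phi> t - \<phi> 0 - t *\<^sub>R \<phi>1 0) \<le> t\<^sup>2 * B"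
proof -
  have seg1: "s \<in> closed_segment 0 t \<Longrightarrow> \<bar>s\<bar> \<le> 1" for s using seg_abs[of s t] t by simp
  have MV: "norm ((\<lambda>s. \<phi> s - s *\<^sub>R \<phi>1 0) t - (\<lambda>s. \<phi> s - s *\<^sub>R \<phi>1 0) 0) \<le> (\<bar>t\<bar> * B) * \<bar>t\<bar>"
  proof (rule mvt_seg[where \<phi>' = "\<lambda>s. \<phi>1 s - \<phi>1 0"])
    fix s assume s: "s \<in> closed_segment 0 t"
    show "((\<lambda>s. \<phi> s - s *\<^sub>R \<phi>1 0) has_vector_derivative \<phi>1 s - \<phi>1 0) (at s)"
      using d1[OF seg1[OF s]] by (auto intro!: derivative_eq_intros)
    have "norm (\<phi>1 s - \<phi>1 0) \<le> B * \<bar>s\<bar>"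
    proof (rule mvt_seg[where \<phi>' = \<phi>2])
      fix r assume r: "r \<in> closed_segment 0 s"
      have "\<bar>r\<bar> \<le> 1" using seg_abs[OF r] seg1[OF s] by simp
      then show "(\<phi>1 has_vector_derivative \<phi>2 r) (at r)" "norm (\<phi>2 r) \<le> B"
        using d2 b2 by auto
    qed
    also have "\<dots> \<le> \<bar>t\<bar> * B"
    proof -
      have "norm (\<phi>2 0) \<le> B" using b2 by simp
      then have "0 \<le> B" using norm_ge_zero order_trans by blast
      then show ?thesis using seg_abs[OF s] by (simp add: mult.commute mult_left_mono)
    qed
    finally show "norm (\<phi>1 s - \<phi>1 0) \<le> \<bar>t\<bar> * B" .
  qed
  have e1: "(\<lambda>s. \<phi> s - s *\<^sub>R \<phi>1 0) t - (\<lambda>s. \<phi> s - s *\<^sub>R \<phi>1 0) 0 = \<phi> t - \<phi> 0 - t *\<^sub>R \<phi>1 0"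
    by (simp add: diff_right_commute)
  have e2: "(\<bar>t\<bar> * B) * \<bar>t\<bar> = t\<^sup>2 * B"
    by (metis abs_mult_self_eq mult.commute mult.left_commute power2_eq_square)
  show ?thesis using MV unfolding e1 e2 .
qed

lemma iexp_lip: "norm (iexp a - iexp b) \<le> \<bar>a - b\<bar>"
proof -
  have e: "iexp b * iexp (a - b) = iexp a"
  proof -
    have "iexp b * iexp (a - b) = exp (\<i> * complex_of_real b + \<i> * complex_of_real (a - b))"
      by (simp only: exp_add)
    also have "\<i> * complex_of_real b + \<i> * complex_of_real (a - b) = \<i> * complex_of_real a"
      by (simp add: algebra_simps)
    finally show ?thesis .
  qed
  have "iexp a - iexp b = iexp b * (iexp (a - b) - 1)"
    by (simp only: right_diff_distrib e mult_1_right)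
  also have "norm \<dots> = norm (iexp (a - b) - 1)" by (simp add: norm_mult)
  also have "\<dots> \<le> \<bar>a - b\<bar>" using iexp_approx1[of "a - b" 0] by simp
  finally show ?thesis .
qed

lemma iexp_taylor1: "norm (iexp a - 1 - \<i> * complex_of_real a) \<le> a\<^sup>2 / 2"
  using iexp_approx1[of a 1] by (simp add: power2_eq_square diff_diff_eq)


lemma E_iexp: "exp (-(2 * pi * \<i>) * complex_of_real s) = iexp (-(2 * pi * s))"
  by (simp add: algebra_simps)

lemma norm_E[simp]: "norm (exp (-(2 * pi * \<i>) * complex_of_real s)) = 1"
  by (simp add: norm_exp_eq_Re)

lemma E_meas[measurable]:
  "(\<lambda>y::real^'n::finite. exp (-(2 * pi * \<i>) * complex_of_real (x \<bullet> y))) \<in> borel_measurable borel"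
  by (intro borel_measurable_continuous_onI continuous_intros)

lemma rapid_meas: "rapid g \<Longrightarrow> g \<in> borel_measurable borel"
  by (simp add: rapid_def)

lemma integrable_E_mult:
  fixes g :: "real^'n::finite \<Rightarrow> complex"
  assumes "integrable lborel g"
  shows "integrable lborel (\<lambda>y. exp (-(2 * pi * \<i>) * complex_of_real (x \<bullet> y)) * g y)"
proof (rule Bochner_Integration.integrable_bound[where f="\<lambda>y. norm (g y)"])
  show "integrable lborel (\<lambda>y. norm (g y))" using assms by (rule integrable_norm)
  have [measurable]: "g \<in> borel_measurable lborel" using assms by (rule borel_measurable_integrable)
  show "(\<lambda>y. exp (-(2 * pi * \<i>) * complex_of_real (x \<bullet> y)) * g y) \<in> borel_measurable lborel"
    by measurable
  show "AE y in lborel. norm (exp (-(2 * pi * \<i>) * complex_of_real (x \<bullet> y)) * g y) \<le> norm (norm (g y))"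
    by (simp add: norm_mult)
qed

lemma fourier_integrable:
  fixes g :: "real^'n::finite \<Rightarrow> complex"
  assumes "rapid g"
  shows "integrable lborel (\<lambda>y. exp (-(2 * pi * \<i>) * complex_of_real (x \<bullet> y)) * g y)"
  by (rule integrable_E_mult[OF rapid_integrable[OF assms]])

lemma fourier_norm_le:
  fixes g :: "real^'n::finite \<Rightarrow> complex"
  assumes "rapid g"
  shows "norm (fourier_fun g x) \<le> (\<integral>y. norm (g y) \<partial>lborel)"
proof -
  have "norm (fourier_fun g x) \<le> (\<integral>y. norm (exp (-(2 * pi * \<i>) * complex_of_real (x \<bullet> y)) * g y) \<partial>lborel)"
    unfolding fourier_fun_def by (rule integral_norm_bound)
  also have "\<dots> = (\<integral>y. norm (g y) \<partial>lborel)" by (simp add: norm_mult)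
  finally show ?thesis .
qed

lemma inner_le_l1: "\<bar>(x::real^'n::finite) \<bullet> y\<bar> \<le> norm x * (\<Sum>i\<in>UNIV. \<bar>y $ i\<bar>)"
proof -
  have "\<bar>x \<bullet> y\<bar> = \<bar>\<Sum>i\<in>UNIV. x $ i * y $ i\<bar>" by (simp add: inner_vec_def)
  also have "\<dots> \<le> (\<Sum>i\<in>UNIV. \<bar>x $ i\<bar> * \<bar>y $ i\<bar>)"
    by (rule order_trans[OF sum_abs]) (simp add: abs_mult)
  also have "\<dots> \<le> (\<Sum>i\<in>UNIV. norm x * \<bar>y $ i\<bar>)"
    by (intro sum_mono mult_right_mono) (auto simp: component_le_norm_cart)
  finally show ?thesis by (simp add: sum_distrib_left)
qed

lemma fourier_cont:
  fixes g :: "real^'n::finite \<Rightarrow> complex"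
  assumes "rapid g"
  shows "continuous_on UNIV (fourier_fun g)"
proof -
  define L where "L = 2 * pi * (\<Sum>i\<in>UNIV. \<integral>y. norm (complex_of_real (y $ i) * g y) \<partial>lborel)"
  have intc: "integrable lborel (\<lambda>y. norm (complex_of_real (y $ i) * g y))" for i
    by (intro integrable_norm rapid_integrable rapid_coord assms)
  have "L-lipschitz_on UNIV (fourier_fun g)"
  proof (rule lipschitz_onI)
    show "0 \<le> L" unfolding L_def by (intro mult_nonneg_nonneg sum_nonneg integral_nonneg_AE) auto
    fix x z :: "real^'n"
    let ?E = "\<lambda>x y::real^'n. exp (-(2 * pi * \<i>) * complex_of_real (x \<bullet> y))"
    have "fourier_fun g x - fourier_fun g z = (\<integral>y. (?E x y - ?E z y) * g y \<partial>lborel)"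
      unfolding fourier_fun_def using fourier_integrable[OF assms]
      by (simp add: left_diff_distrib)
    also have "norm \<dots> \<le> (\<integral>y. norm ((?E x y - ?E z y) * g y) \<partial>lborel)"
      by (rule integral_norm_bound)
    also have "\<dots> \<le> (\<integral>y. dist x z * (2 * pi * (\<Sum>i\<in>UNIV. norm (complex_of_real (y $ i) * g y))) \<partial>lborel)"
    proof (rule integral_mono)
      show "integrable lborel (\<lambda>y. norm ((?E x y - ?E z y) * g y))"
        using fourier_integrable[OF assms, of x] fourier_integrable[OF assms, of z]
        by (intro integrable_norm) (simp add: left_diff_distrib)
      show "integrable lborel (\<lambda>y. dist x z * (2 * pi * (\<Sum>i\<in>UNIV. norm (complex_of_real (y $ i) * g y))))"
        using intc by (intro integrable_mult_right integrable_sum) auto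
      fix y :: "real^'n"
      have "norm (?E x y - ?E z y) \<le> \<bar>(-(2 * pi * (x \<bullet> y))) - (-(2 * pi * (z \<bullet> y)))\<bar>"
        unfolding E_iexp by (rule iexp_lip)
      also have "\<dots> = 2 * pi * \<bar>(x - z) \<bullet> y\<bar>"
      proof -
        have "(-(2 * pi * (x \<bullet> y))) - (-(2 * pi * (z \<bullet> y))) = -(2 * pi * ((x - z) \<bullet> y))"
          by (simp add: inner_diff_left algebra_simps)
        then show ?thesis by (simp add: abs_mult)
      qed
      also have "\<dots> \<le> 2 * pi * (dist x z * (\<Sum>i\<in>UNIV. \<bar>y $ i\<bar>))"
        using inner_le_l1[of "x - z" y] by (simp add: dist_norm)
      finally have "norm ((?E x y - ?E z y) * g y) \<le> 2 * pi * (dist x z * (\<Sum>i\<in>UNIV. \<bar>y $ i\<bar>)) * norm (g y)"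
        by (simp add: norm_mult mult_right_mono)
      also have "\<dots> = dist x z * (2 * pi * (\<Sum>i\<in>UNIV. norm (complex_of_real (y $ i) * g y)))"
        by (simp add: norm_mult sum_distrib_left sum_distrib_right algebra_simps)
      finally show "norm ((?E x y - ?E z y) * g y) \<le> dist x z * (2 * pi * (\<Sum>i\<in>UNIV. norm (complex_of_real (y $ i) * g y)))" .
    qed
    also have "\<dots> = L * dist x z"
      unfolding L_def using intc by (simp add: integral_sum)
    finally show "dist (fourier_fun g x) (fourier_fun g z) \<le> L * dist x z" by (simp add: dist_norm)
  qed
  then show ?thesis by (rule lipschitz_on_continuous_on)
qed

definition qd :: "'n::finite \<Rightarrow> (real^'n \<Rightarrow> complex) \<Rightarrow> real^'n \<Rightarrow> complex" where
  "qd j g = (\<lambda>y. (-(2 * pi * \<i>)) * (complex_of_real (y $ j) * g y))"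

lemma rapid_qd: "rapid g \<Longrightarrow> rapid (qd j g)"
  unfolding qd_def by (intro rapid_cmult rapid_coord)

lemma schwartz_qd: "schwartz g \<Longrightarrow> schwartz (qd j g)"
  unfolding qd_def by (intro schwartz_cmult schwartz_coord)

lemma inner_line: "(x + t *\<^sub>R axis j 1) \<bullet> (y::real^'n::finite) = x \<bullet> y + t * y $ j"
  by (simp add: inner_add_left inner_axis')

lemma fourier_vd:
  fixes g :: "real^'n::finite \<Rightarrow> complex"
  assumes "rapid g"
  shows "((\<lambda>t. fourier_fun g (x + t *\<^sub>R axis j 1)) has_vector_derivative fourier_fun (qd j g) x) (at 0)"
  unfolding fourier_fun_def
proof (rule QDUI)
  let ?E = "\<lambda>x y::real^'n. exp (-(2 * pi * \<i>) * complex_of_real (x \<bullet> y))"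
  show "\<And>t. integrable lborel (\<lambda>y. ?E (x + t *\<^sub>R axis j 1) y * g y)"
    by (rule fourier_integrable[OF assms])
  show "integrable lborel (\<lambda>y. ?E x y * qd j g y)"
    by (rule fourier_integrable[OF rapid_qd[OF assms]])
  show "integrable lborel (\<lambda>y. 2 * pi\<^sup>2 * norm (complex_of_real (y $ j) * (complex_of_real (y $ j) * g y)))"
    by (intro integrable_mult_right integrable_norm rapid_integrable rapid_coord assms)
  fix t :: real and y :: "real^'n"
  assume "\<bar>t\<bar> \<le> 1"
  define \<theta> where "\<theta> = -(2 * pi * t * y $ j)"
  have e1: "?E (x + t *\<^sub>R axis j 1) y = ?E x y * iexp \<theta>"
    unfolding inner_line E_iexp \<theta>_def exp_add[symmetric] by (simp add: algebra_simps)
  have "?E (x + t *\<^sub>R axis j 1) y * g y - ?E (x + 0 *\<^sub>R axis j 1) y * g y - t *\<^sub>R (?E x y * qd j g y)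
        = ?E x y * g y * (iexp \<theta> - 1 - \<i> * complex_of_real \<theta>)"
    unfolding e1 qd_def \<theta>_def by (simp add: algebra_simps scaleR_conv_of_real)
  also have "norm \<dots> = norm (g y) * norm (iexp \<theta> - 1 - \<i> * complex_of_real \<theta>)"
    by (simp add: norm_mult)
  also have "\<dots> \<le> norm (g y) * (\<theta>\<^sup>2 / 2)"
    by (intro mult_left_mono iexp_taylor1) simp
  also have "\<dots> = t\<^sup>2 * (2 * pi\<^sup>2 * norm (complex_of_real (y $ j) * (complex_of_real (y $ j) * g y)))"
    unfolding \<theta>_def by (simp add: norm_mult power2_eq_square algebra_simps)
  finally show "norm (?E (x + t *\<^sub>R axis j 1) y * g y - ?E (x + 0 *\<^sub>R axis j 1) y * g y - t *\<^sub>R (?E x y * qd j g y))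
        \<le> t\<^sup>2 * (2 * pi\<^sup>2 * norm (complex_of_real (y $ j) * (complex_of_real (y $ j) * g y)))" .
qed


lemma translate_integral:
  fixes h :: "real^'n::finite \<Rightarrow> complex"
  assumes [measurable]: "h \<in> borel_measurable borel"
  shows "(\<integral>y. h (y + c) \<partial>lborel) = (\<integral>y. h y \<partial>lborel)"
proof -
  have "(\<integral>y. h y \<partial>lborel) = (\<integral>y. h y \<partial>(distr lborel borel ((+) c)))"
    by (simp add: lborel_distr_plus)
  also have "\<dots> = (\<integral>y. h (c + y) \<partial>lborel)"
    by (rule integral_distr) auto
  finally show ?thesis by (simp add: add.commute)
qed

lemma translate_integrable:
  fixes h :: "real^'n::finite \<Rightarrow> complex"
  assumes "integrable lborel h"
  shows "integrable lborel (\<lambda>y. h (y + c))"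
proof -
  have [measurable]: "h \<in> borel_measurable borel"
    using borel_measurable_integrable[OF assms] by simp
  have "integrable (distr lborel borel ((+) c)) h"
    using assms by (simp add: lborel_distr_plus)
  then have "integrable lborel (\<lambda>y. h (c + y))"
    by (subst (asm) integrable_distr_eq) auto
  then show ?thesis by (simp add: add.commute)
qed

lemma inv_sq_shift:
  fixes a s :: real
  assumes "\<bar>s\<bar> \<le> 1"
  shows "1 / (1 + (a + s)\<^sup>2) \<le> 3 / (1 + a\<^sup>2)"
proof -
  have h1: "a\<^sup>2 \<le> 2 * (a + s)\<^sup>2 + 2 * s\<^sup>2"
    using sum_squares_ge_zero[of "a + 2 * s" 0] by (simp add: power2_eq_square algebra_simps)
  have h2: "s\<^sup>2 \<le> 1" using assms by (simp add: abs_square_le_1)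
  have h3: "3 * (1 + (a + s)\<^sup>2) = 3 + 3 * (a + s)\<^sup>2" by simp
  have "1 + a\<^sup>2 \<le> 3 * (1 + (a + s)\<^sup>2)"
    using h1 h2 h3 zero_le_power2[of "a + s"] by linarith
  then show ?thesis
    by (simp add: field_simps add_pos_nonneg)
qed

lemma wgt_shift:
  assumes "\<bar>s\<bar> \<le> 1"
  shows "wgt (y + s *\<^sub>R axis j 1) \<le> 3 * wgt (y::real^'n::finite)"
proof -
  have "wgt (y + s *\<^sub>R axis j 1) = (\<Prod>i\<in>UNIV. 1 / (1 + (y $ i + s * (if j = i then 1 else 0))\<^sup>2))"
    unfolding wgt_def by (intro prod.cong refl) (simp add: axis_def)
  also have "\<dots> \<le> (\<Prod>i\<in>UNIV. (if j = i then 3 else 1) * (1 / (1 + (y $ i)\<^sup>2)))"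
    by (intro prod_mono) (auto simp: add_pos_nonneg inv_sq_shift[OF assms])
  also have "\<dots> = 3 * wgt y"
    unfolding wgt_def prod.distrib by simp
  finally show ?thesis .
qed

lemma schwartz_rapid: "schwartz f \<Longrightarrow> rapid f"
  unfolding rapid_def mon_def using schwartz_meas schwartz_bound[of f _ "[]"] by auto

lemma fourier_ibp:
  fixes f :: "real^'n::finite \<Rightarrow> complex"
  assumes "schwartz f"
  shows "fourier_fun (pderiv_dir j f) x = (2 * pi * \<i> * complex_of_real (x $ j)) * fourier_fun f x"
proof -
  let ?E = "\<lambda>y::real^'n. exp (-(2 * pi * \<i>) * complex_of_real (x \<bullet> y))"
  let ?a = "axis j (1::real) :: real^'n"
  define T where "T t = (\<integral>y. ?E y * f (y + t *\<^sub>R ?a) \<partial>lborel)" for t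
  have sm: "smooth_on UNIV f" using assms by (rule schwartz_smooth)
  have rf: "rapid f" using assms by (rule schwartz_rapid)
  have rf': "rapid (pderiv_dir j f)" using assms by (intro schwartz_rapid schwartz_pderiv)
  have [measurable]: "f \<in> borel_measurable borel" using rf by (rule rapid_meas)
  obtain C where C: "\<And>z. norm (pderiv_dir j (pderiv_dir j f) z) \<le> C * wgt z"
    using rapid_bound_wgt[OF schwartz_rapid[OF schwartz_pderiv[OF schwartz_pderiv[OF assms]]]] by blast
  have C0: "0 \<le> C"
  proof -
    have "norm (pderiv_dir j (pderiv_dir j f) 0) \<le> C * wgt (0::real^'n)" by (rule C)
    then have "0 \<le> C * wgt (0::real^'n)" using norm_ge_zero[of "pderiv_dir j (pderiv_dir j f) 0"] by linarith
    then show ?thesis using wgt_pos[of "0::real^'n"] by (simp add: zero_le_mult_iff)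
  qed
  have T1: "(T has_vector_derivative fourier_fun (pderiv_dir j f) x) (at 0)"
    unfolding T_def fourier_fun_def
  proof (rule QDUI[where G = "\<lambda>y. 3 * C * wgt y"])
    show "integrable lborel (\<lambda>y. ?E y * f (y + t *\<^sub>R ?a))" for t
      by (intro integrable_E_mult translate_integrable rapid_integrable rf)
    show "integrable lborel (\<lambda>y. ?E y * pderiv_dir j f y)"
      by (rule fourier_integrable[OF rf'])
    show "integrable lborel (\<lambda>y. 3 * C * wgt y)"
      by (intro integrable_mult_right integrable_wgt)
    fix t :: real and y :: "real^'n"
    assume t: "\<bar>t\<bar> \<le> 1"
    have "norm ((\<lambda>s. f (y + s *\<^sub>R ?a)) t - (\<lambda>s. f (y + s *\<^sub>R ?a)) 0 - t *\<^sub>R (\<lambda>s. pderiv_dir j f (y + s *\<^sub>R ?a)) 0)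
          \<le> t\<^sup>2 * (3 * C * wgt y)"
    proof (rule taylor2)
      show "((\<lambda>s. f (y + s *\<^sub>R ?a)) has_vector_derivative pderiv_dir j f (y + s *\<^sub>R ?a)) (at s)" for s
        by (rule smooth_vd[OF sm])
      show "((\<lambda>s. pderiv_dir j f (y + s *\<^sub>R ?a)) has_vector_derivative pderiv_dir j (pderiv_dir j f) (y + s *\<^sub>R ?a)) (at s)" for s
        by (rule smooth_vd[OF smooth_on_pderiv[OF sm]])
      show "norm (pderiv_dir j (pderiv_dir j f) (y + s *\<^sub>R ?a)) \<le> 3 * C * wgt y" if "\<bar>s\<bar> \<le> 1" for s
      proof -
        have "norm (pderiv_dir j (pderiv_dir j f) (y + s *\<^sub>R ?a)) \<le> C * wgt (y + s *\<^sub>R ?a)" by (rule C)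
        also have "\<dots> \<le> C * (3 * wgt y)" by (intro mult_left_mono wgt_shift that C0)
        finally show ?thesis by simp
      qed
    qed (use t in auto)
    then have "norm (f (y + t *\<^sub>R ?a) - f y - t *\<^sub>R pderiv_dir j f y) \<le> t\<^sup>2 * (3 * C * wgt y)"
      by simp
    moreover have "?E y * f (y + t *\<^sub>R ?a) - ?E y * f (y + 0 *\<^sub>R ?a) - t *\<^sub>R (?E y * pderiv_dir j f y)
        = ?E y * (f (y + t *\<^sub>R ?a) - f y - t *\<^sub>R pderiv_dir j f y)"
      by (simp add: algebra_simps scaleR_conv_of_real)
    ultimately show "norm (?E y * f (y + t *\<^sub>R ?a) - ?E y * f (y + 0 *\<^sub>R ?a) - t *\<^sub>R (?E y * pderiv_dir j f y))
        \<le> t\<^sup>2 * (3 * C * wgt y)"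
      by (simp add: norm_mult)
  qed
  have T2: "T t = iexp (2 * pi * x $ j * t) * fourier_fun f x" for t
  proof -
    have "T t = (\<integral>y. (\<lambda>z. ?E (z - t *\<^sub>R ?a) * f z) (y + t *\<^sub>R ?a) \<partial>lborel)"
      unfolding T_def by simp
    also have "\<dots> = (\<integral>z. ?E (z - t *\<^sub>R ?a) * f z \<partial>lborel)"
      by (rule translate_integral) measurable
    also have "\<dots> = (\<integral>z. iexp (2 * pi * x $ j * t) * (?E z * f z) \<partial>lborel)"
    proof (rule Bochner_Integration.integral_cong[OF refl])
      fix z :: "real^'n"
      have "?E (z - t *\<^sub>R ?a) = iexp (-(2 * pi * (x \<bullet> z)) + 2 * pi * x $ j * t)"
        unfolding E_iexp by (simp add: inner_diff_right inner_axis algebra_simps)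
      also have "\<dots> = iexp (2 * pi * x $ j * t) * ?E z"
        unfolding E_iexp by (simp add: exp_add[symmetric] algebra_simps)
      finally show "?E (z - t *\<^sub>R ?a) * f z = iexp (2 * pi * x $ j * t) * (?E z * f z)" by simp
    qed
    also have "\<dots> = iexp (2 * pi * x $ j * t) * fourier_fun f x"
      unfolding fourier_fun_def by simp
    finally show ?thesis .
  qed
  have T3: "(T has_vector_derivative (2 * pi * \<i> * complex_of_real (x $ j)) * fourier_fun f x) (at 0)"
  proof -
    have l: "((\<lambda>t. 2 * pi * x $ j * t) has_vector_derivative 2 * pi * x $ j) (at 0)"
      by (auto intro!: derivative_eq_intros)
    have "((iexp \<circ> (\<lambda>t. 2 * pi * x $ j * t)) has_vector_derivative ((2 * pi * x $ j) *\<^sub>R (\<i> * iexp (2 * pi * x $ j * 0)))) (at 0)"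
      by (rule vector_diff_chain_at[OF l has_vector_derivative_iexp])
    then have "((\<lambda>t. iexp (2 * pi * x $ j * t)) has_vector_derivative (2 * pi * \<i> * complex_of_real (x $ j))) (at 0)"
      by (simp add: o_def scaleR_conv_of_real algebra_simps)
    then have "((\<lambda>t. iexp (2 * pi * x $ j * t) * fourier_fun f x) has_vector_derivative (2 * pi * \<i> * complex_of_real (x $ j)) * fourier_fun f x) (at 0)"
      by (rule has_vector_derivative_mult_left)
    then show ?thesis unfolding T2[abs_def] .
  qed
  show ?thesis using vector_derivative_unique_at[OF T1 T3] .
qed


lemma fourier_iter:
  fixes f :: "real^'n::finite \<Rightarrow> complex"
  assumes "schwartz f"
  shows "fourier_fun (iter_pderiv ds f) x = prod_list (map (\<lambda>d. 2 * pi * \<i> * complex_of_real (x $ d)) ds) * fourier_fun f x"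
  using assms
proof (induction ds arbitrary: f)
  case Nil then show ?case by simp
next
  case (Cons d ds)
  have "fourier_fun (iter_pderiv (d # ds) f) x = fourier_fun (iter_pderiv ds (pderiv_dir d f)) x"
    by (simp add: iter_pderiv_Cons)
  also have "\<dots> = prod_list (map (\<lambda>d. 2 * pi * \<i> * complex_of_real (x $ d)) ds) * fourier_fun (pderiv_dir d f) x"
    by (rule Cons.IH[OF schwartz_pderiv[OF Cons.prems]])
  also have "\<dots> = prod_list (map (\<lambda>d. 2 * pi * \<i> * complex_of_real (x $ d)) (d # ds)) * fourier_fun f x"
    by (simp add: fourier_ibp[OF Cons.prems])
  finally show ?case .
qed

lemma prod_list_count:
  fixes h :: "'n::finite \<Rightarrow> complex"
  shows "prod_list (map h ds) = (\<Prod>i\<in>UNIV. h i ^ count_list ds i)"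
proof (induction ds)
  case Nil then show ?case by simp
next
  case (Cons d ds)
  have "(\<Prod>i\<in>UNIV. h i ^ count_list (d # ds) i) = (\<Prod>i\<in>UNIV. h i ^ count_list ds i * (if d = i then h i else 1))"
    by (intro prod.cong) auto
  also have "\<dots> = (\<Prod>i\<in>UNIV. h i ^ count_list ds i) * h d"
    by (simp add: prod.distrib power_commutes)
  finally show ?case using Cons by (simp add: mult.commute)
qed

lemma exists_count_list: "\<exists>ds::'n::finite list. \<forall>i. count_list ds i = \<alpha> i"
proof -
  obtain ds where "mset ds = Abs_multiset \<alpha>" using ex_mset by blast
  then have "count_list ds i = \<alpha> i" for i
    by (metis count_Abs_multiset count_mset finite)
  then show ?thesis by blast
qed

lemma fourier_decay:
  fixes f :: "real^'n::finite \<Rightarrow> complex"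
  assumes "schwartz f"
  shows "\<exists>B. \<forall>x. norm (mon \<alpha> x *\<^sub>R fourier_fun f x) \<le> B"
proof -
  obtain ds where ds: "\<And>i. count_list ds i = \<alpha> i" using exists_count_list by blast
  define K where "K = (\<Prod>i\<in>UNIV. (2 * pi * \<i>) ^ \<alpha> i)"
  have "K \<noteq> 0" unfolding K_def by (simp add: prod_zero_iff)
  then have K0: "norm K > 0" by simp
  have eq: "fourier_fun (iter_pderiv ds f) x = K * (mon \<alpha> x *\<^sub>R fourier_fun f x)" for x
  proof -
    have "prod_list (map (\<lambda>d. 2 * pi * \<i> * complex_of_real (x $ d)) ds)
          = (\<Prod>i\<in>UNIV. (2 * pi * \<i> * complex_of_real (x $ i)) ^ \<alpha> i)"
      by (simp add: prod_list_count ds)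
    also have "\<dots> = K * complex_of_real (mon \<alpha> x)"
      unfolding K_def mon_def by (simp add: power_mult_distrib prod.distrib)
    finally show ?thesis
      using fourier_iter[OF assms, of ds x] by (simp add: scaleR_conv_of_real algebra_simps)
  qed
  show ?thesis
  proof (intro exI allI)
    fix x
    have "norm K * norm (mon \<alpha> x *\<^sub>R fourier_fun f x) = norm (fourier_fun (iter_pderiv ds f) x)"
      by (simp add: eq norm_mult)
    also have "\<dots> \<le> (\<integral>y. norm (iter_pderiv ds f y) \<partial>lborel)"
      by (intro fourier_norm_le schwartz_rapid schwartz_iter assms)
    finally show "norm (mon \<alpha> x *\<^sub>R fourier_fun f x) \<le> (\<integral>y. norm (iter_pderiv ds f y) \<partial>lborel) / norm K"
      using K0 by (simp add: field_simps mult.commute)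
  qed
qed

lemma fourier_pderiv:
  fixes f :: "real^'n::finite \<Rightarrow> complex"
  assumes "schwartz f"
  shows "pderiv_dir d (fourier_fun f) = fourier_fun (qd d f)"
  by (rule pderiv_eq) (rule fourier_vd[OF schwartz_rapid[OF assms]])

lemma fourier_iter_pderiv:
  fixes f :: "real^'n::finite \<Rightarrow> complex"
  assumes "schwartz f"
  shows "iter_pderiv ds (fourier_fun f) = fourier_fun (fold qd ds f) \<and> schwartz (fold qd ds f)"
  using assms
proof (induction ds arbitrary: f)
  case Nil then show ?case by simp
next
  case (Cons d ds)
  have "iter_pderiv (d # ds) (fourier_fun f) = iter_pderiv ds (fourier_fun (qd d f))"
    by (simp add: iter_pderiv_Cons fourier_pderiv[OF Cons.prems])
  then show ?case using Cons.IH[OF schwartz_qd[OF Cons.prems]] by simp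
qed

lemma schwartz_fourier:
  fixes f :: "real^'n::finite \<Rightarrow> complex"
  assumes "schwartz f"
  shows "schwartz (fourier_fun f)"
  unfolding schwartz_def
proof (intro conjI allI)
  show "smooth_on UNIV (fourier_fun f)"
    unfolding smooth_on_def
  proof (intro allI conjI ballI)
    fix ds
    have e: "iter_pderiv ds (fourier_fun f) = fourier_fun (fold qd ds f)" and s: "schwartz (fold qd ds f)"
      using fourier_iter_pderiv[OF assms] by auto
    show "continuous_on UNIV (iter_pderiv ds (fourier_fun f))"
      unfolding e by (intro fourier_cont schwartz_rapid s)
    fix x i
    show "(\<lambda>t. iter_pderiv ds (fourier_fun f) (x + t *\<^sub>R axis i 1)) differentiable at 0"
      unfolding e by (rule differentiableI_vector[OF fourier_vd[OF schwartz_rapid[OF s]]])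
  qed
  fix \<alpha> :: "'n \<Rightarrow> nat" and ds
  have e: "iter_pderiv ds (fourier_fun f) = fourier_fun (fold qd ds f)" and s: "schwartz (fold qd ds f)"
    using fourier_iter_pderiv[OF assms] by auto
  show "bounded (range (\<lambda>x. (\<Prod>i\<in>UNIV. (x $ i) ^ (\<alpha> i)) *\<^sub>R iter_pderiv ds (fourier_fun f) x))"
    unfolding e bounded_iff mon_def[symmetric] using fourier_decay[OF s] by blast
qed


lemma blowup_sum_zero:
  fixes \<phi> :: "real^'n::finite \<Rightarrow> (complex^'m::finite) set"
    and M :: "(real^'n) measure" and h :: "real^'n \<Rightarrow> complex^'m"
    and f :: "'m \<Rightarrow> real^'n \<Rightarrow> complex"
  assumes fin: "finite_vec_measure M h"
    and mphi: "\<forall>\<xi>. \<xi> \<noteq> 0 \<longrightarrow> fourier_meas M h \<xi> \<in> \<phi> \<xi>"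
    and hom: "\<forall>\<xi> a. \<xi> \<noteq> 0 \<longrightarrow> a > 0 \<longrightarrow> \<phi> (a *\<^sub>R \<xi>) = \<phi> \<xi>"
    and sf: "\<And>i. schwartz (f i)"
    and perp: "\<forall>\<xi> w. \<xi> \<noteq> 0 \<longrightarrow> w \<in> \<phi> \<xi> \<longrightarrow> (\<Sum>i\<in>UNIV. f i \<xi> * w $ i) = 0"
    and r: "r > 0"
  shows "(\<Sum>i\<in>UNIV. blowup_int M h x r i (fourier_fun (f i))) = 0"
proof -
  have sM: "sets M = sets borel" and fM: "finite_measure M" and hint: "integrable M h"
    using fin unfolding finite_vec_measure_def by auto
  interpret M: finite_measure M by (rule fM)
  interpret P: pair_sigma_finite M "lborel :: (real^'n) measure"
    by (intro pair_sigma_finite.intro M.sigma_finite_measure_axioms lborel.sigma_finite_measure_axioms)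
  have [measurable]: "(\<lambda>y. y) \<in> borel_measurable M"
    using measurable_ident_sets[OF sM] by (simp add: id_def)
  have [measurable]: "h \<in> borel_measurable M" using hint by (rule borel_measurable_integrable)
  have [measurable]: "f i \<in> borel_measurable borel" for i
    using sf by (intro schwartz_meas)
  have hiint: "integrable M (\<lambda>y. h y $ i)" for i
    using integrable_bounded_linear[OF bounded_linear_vec_nth hint] .
  define K where "K i y \<xi> = exp (-(2 * pi * \<i>) * complex_of_real (((1 / r) *\<^sub>R (y - x)) \<bullet> \<xi>)) * f i \<xi> * h y $ i"
    for i y and \<xi> :: "real^'n"
  have sP: "sets (M \<Otimes>\<^sub>M (lborel :: (real^'n) measure)) = sets (borel :: ((real^'n) \<times> (real^'n)) measure)"
    by (subst borel_prod[symmetric]) (rule sets_pair_measure_cong[OF sM sets_lborel])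
  have Kmeas: "(\<lambda>(y, \<xi>). K i y \<xi>) \<in> borel_measurable (M \<Otimes>\<^sub>M lborel)" for i
  proof -
    have mA: "(\<lambda>p. exp (-(2 * pi * \<i>) * complex_of_real (((1 / r) *\<^sub>R (fst p - x)) \<bullet> snd p)))
        \<in> borel_measurable (M \<Otimes>\<^sub>M lborel)"
      unfolding measurable_cong_sets[OF sP refl]
      by (intro borel_measurable_continuous_onI continuous_intros)
    have mB: "(\<lambda>p. f i (snd p)) \<in> borel_measurable (M \<Otimes>\<^sub>M lborel)"
      unfolding measurable_cong_sets[OF sP refl]
      by (intro borel_measurable_continuous_onI continuous_on_compose2[OF schwartz_cont[OF sf[of i]]] continuous_intros) auto
    have mC: "(\<lambda>p. h (fst p) $ i) \<in> borel_measurable (M \<Otimes>\<^sub>M lborel)"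
      by (rule measurable_compose[OF measurable_fst borel_measurable_integrable[OF hiint[of i]]])
    have eqK: "(\<lambda>(y, \<xi>). K i y \<xi>) = (\<lambda>p. exp (-(2 * pi * \<i>) * complex_of_real (((1 / r) *\<^sub>R (fst p - x)) \<bullet> snd p)) * f i (snd p) * h (fst p) $ i)"
      by (auto simp: K_def fun_eq_iff)
    show ?thesis unfolding eqK by (intro borel_measurable_times mA mB mC)
  qed
  have Kint: "integrable (M \<Otimes>\<^sub>M lborel) (\<lambda>(y, \<xi>). K i y \<xi>)" for i
  proof (rule P.Fubini_integrable)
    show "(\<lambda>(y, \<xi>). K i y \<xi>) \<in> borel_measurable (M \<Otimes>\<^sub>M lborel)" by (rule Kmeas)
    have "(\<lambda>y. \<integral>\<xi>. norm ((\<lambda>(y, \<xi>). K i y \<xi>) (y, \<xi>)) \<partial>lborel) = (\<lambda>y. (\<integral>\<xi>. norm (f i \<xi>) \<partial>lborel) * norm (h y $ i))"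
      unfolding K_def by (simp add: norm_mult)
    then show "integrable M (\<lambda>y. \<integral>\<xi>. norm ((\<lambda>(y, \<xi>). K i y \<xi>) (y, \<xi>)) \<partial>lborel)"
      using hiint by (simp add: integrable_norm)
    show "AE y in M. integrable lborel (\<lambda>\<xi>. (\<lambda>(y, \<xi>). K i y \<xi>) (y, \<xi>))"
    proof (rule AE_I2)
      fix y
      have I1: "integrable lborel (\<lambda>\<xi>. exp (-(2 * pi * \<i>) * complex_of_real (((1 / r) *\<^sub>R (y - x)) \<bullet> \<xi>)) * f i \<xi>)"
        by (rule integrable_E_mult[OF rapid_integrable[OF schwartz_rapid[OF sf]]])
      have "integrable lborel (\<lambda>\<xi>. exp (-(2 * pi * \<i>) * complex_of_real (((1 / r) *\<^sub>R (y - x)) \<bullet> \<xi>)) * f i \<xi> * h y $ i)"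
        by (rule integrable_mult_left, rule I1)
      then show "integrable lborel (\<lambda>\<xi>. (\<lambda>(y, \<xi>). K i y \<xi>) (y, \<xi>))"
        unfolding K_def by simp
    qed
  qed
  have step1: "blowup_int M h x r i (fourier_fun (f i)) = (\<integral>y. (\<integral>\<xi>. K i y \<xi> \<partial>lborel) \<partial>M)" for i
    unfolding blowup_int_def fourier_fun_def K_def
    by (intro Bochner_Integration.integral_cong refl) simp
  have step2: "(\<integral>y. (\<integral>\<xi>. K i y \<xi> \<partial>lborel) \<partial>M) = (\<integral>\<xi>. (\<integral>y. K i y \<xi> \<partial>M) \<partial>lborel)" for i
    using P.integral_fst[OF Kint[of i]] P.integral_snd[OF Kint[of i]] by simp
  have inner0: "(\<Sum>i\<in>UNIV. (\<integral>y. K i y \<xi> \<partial>M)) = 0" if "\<xi> \<noteq> 0" for \<xi>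
  proof -
    define \<xi>' where "\<xi>' = (1 / r) *\<^sub>R \<xi>"
    define c0 where "c0 = exp (-(2 * pi * \<i>) * complex_of_real (- (\<xi>' \<bullet> x)))"
    have nz: "\<xi>' \<noteq> 0" using that r by (simp add: \<xi>'_def)
    have m1: "fourier_meas M h \<xi>' \<in> \<phi> \<xi>'" using mphi nz by blast
    have "\<phi> \<xi>' = \<phi> \<xi>" unfolding \<xi>'_def using hom that r by simp
    then have mem: "fourier_meas M h \<xi>' \<in> \<phi> \<xi>" using m1 by simp
    have Ki: "(\<integral>y. K i y \<xi> \<partial>M) = c0 * f i \<xi> * fourier_meas M h \<xi>' $ i" for i
    proof -
      have "(\<integral>y. K i y \<xi> \<partial>M) = (\<integral>y. (c0 * f i \<xi>) * (exp (-(2 * pi * \<i>) * complex_of_real (\<xi>' \<bullet> y)) * h y $ i) \<partial>M)"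
      proof (intro Bochner_Integration.integral_cong refl)
        fix y
        have "((1 / r) *\<^sub>R (y - x)) \<bullet> \<xi> = \<xi>' \<bullet> y + (- (\<xi>' \<bullet> x))"
          unfolding \<xi>'_def by (simp add: inner_diff_left inner_commute algebra_simps)
        then have "K i y \<xi> = exp (-(2 * pi * \<i>) * complex_of_real (\<xi>' \<bullet> y)) * c0 * f i \<xi> * h y $ i"
          unfolding K_def c0_def by (simp only: of_real_add distrib_left exp_add)
        then show "K i y \<xi> = (c0 * f i \<xi>) * (exp (-(2 * pi * \<i>) * complex_of_real (\<xi>' \<bullet> y)) * h y $ i)"
          by (simp add: mult_ac)
      qed
      also have "\<dots> = c0 * f i \<xi> * fourier_meas M h \<xi>' $ i"
        unfolding fourier_meas_def by simp
      finally show ?thesis .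
    qed
    have "(\<Sum>i\<in>UNIV. (\<integral>y. K i y \<xi> \<partial>M)) = c0 * (\<Sum>i\<in>UNIV. f i \<xi> * fourier_meas M h \<xi>' $ i)"
      by (simp add: Ki sum_distrib_left mult.assoc)
    also have "\<dots> = 0" using perp that mem by simp
    finally show ?thesis .
  qed
  have "(\<Sum>i\<in>UNIV. blowup_int M h x r i (fourier_fun (f i))) = (\<Sum>i\<in>UNIV. (\<integral>\<xi>. (\<integral>y. K i y \<xi> \<partial>M) \<partial>lborel))"
    by (simp add: step1 step2)
  also have "\<dots> = (\<integral>\<xi>. (\<Sum>i\<in>UNIV. (\<integral>y. K i y \<xi> \<partial>M)) \<partial>lborel)"
    by (rule Bochner_Integration.integral_sum[symmetric]) (rule P.integrable_snd[OF Kint])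
  also have "\<dots> = 0"
    by (rule integral_eq_zero_AE) (use AE_lborel_singleton[of 0] inner0 in \<open>auto elim: eventually_mono\<close>)
  finally show ?thesis .
qed


theorem mainTheorem6:
  fixes \<phi> :: "real^'n::finite \<Rightarrow> (complex^'m::finite) set"
    and M :: "(real^'n) measure" and h :: "real^'n \<Rightarrow> complex^'m"
    and x :: "real^'n"
    and N :: "(real^'n) measure" and g :: "real^'n \<Rightarrow> complex^'m"
    and Lam :: "'m \<Rightarrow> (real^'n \<Rightarrow> complex) \<Rightarrow> complex"
  assumes "smooth_hom_line_bundle \<phi>"
    and "M_phi \<phi> M h"
    and "(N, g, Lam) \<in> Tan_star M h x"
  shows "\<forall>f. S_phi_perp \<phi> f \<longrightarrow> (\<Sum>i\<in>UNIV. Lam i (fourier_fun (f i))) = 0"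
proof (intro allI impI)
  fix f :: "'m \<Rightarrow> real^'n \<Rightarrow> complex"
  assume Sf: "S_phi_perp \<phi> f"
  have sf: "\<And>i. schwartz (f i)"
    and perp: "\<forall>\<xi> w. \<xi> \<noteq> 0 \<longrightarrow> w \<in> \<phi> \<xi> \<longrightarrow> (\<Sum>i\<in>UNIV. f i \<xi> * w $ i) = 0"
    using Sf unfolding S_phi_perp_def by auto
  have fin: "finite_vec_measure M h" and mphi: "\<forall>\<xi>. \<xi> \<noteq> 0 \<longrightarrow> fourier_meas M h \<xi> \<in> \<phi> \<xi>"
    using assms(2) unfolding M_phi_def by auto
  have hom: "\<forall>\<xi> a. \<xi> \<noteq> 0 \<longrightarrow> a > 0 \<longrightarrow> \<phi> (a *\<^sub>R \<xi>) = \<phi> \<xi>"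
    using assms(1) unfolding smooth_hom_line_bundle_def by blast
  have "\<exists>r c :: nat \<Rightarrow> real. (\<forall>k. r k > 0) \<and>
        (\<forall>j \<psi>. schwartz \<psi> \<longrightarrow>
            (\<lambda>k. complex_of_real (c k) * blowup_int M h x (r k) j \<psi>) \<longlonglongrightarrow> Lam j \<psi>)"
    using assms(3) unfolding Tan_star_def by blast
  then obtain r c :: "nat \<Rightarrow> real" where rpos: "\<And>k. r k > 0"
    and conv: "\<And>j \<psi>. schwartz \<psi> \<Longrightarrow>
            (\<lambda>k. complex_of_real (c k) * blowup_int M h x (r k) j \<psi>) \<longlonglongrightarrow> Lam j \<psi>"
    by blast
  have lim: "(\<lambda>k. \<Sum>i\<in>UNIV. complex_of_real (c k) * blowup_int M h x (r k) i (fourier_fun (f i)))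
        \<longlonglongrightarrow> (\<Sum>i\<in>UNIV. Lam i (fourier_fun (f i)))"
    by (intro tendsto_sum conv schwartz_fourier sf)
  have "(\<lambda>k. \<Sum>i\<in>UNIV. complex_of_real (c k) * blowup_int M h x (r k) i (fourier_fun (f i))) = (\<lambda>k. 0)"
  proof
    fix k
    have "(\<Sum>i\<in>UNIV. complex_of_real (c k) * blowup_int M h x (r k) i (fourier_fun (f i)))
          = complex_of_real (c k) * (\<Sum>i\<in>UNIV. blowup_int M h x (r k) i (fourier_fun (f i)))"
      by (simp add: sum_distrib_left)
    also have "\<dots> = 0"
      using blowup_sum_zero[OF fin mphi hom sf perp rpos[of k]] by simp
    finally show "(\<Sum>i\<in>UNIV. complex_of_real (c k) * blowup_int M h x (r k) i (fourier_fun (f i))) = 0" .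
  qed
  with lim show "(\<Sum>i\<in>UNIV. Lam i (fourier_fun (f i))) = 0"
    by (simp add: LIMSEQ_const_iff)
qed


end
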